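(* Let $M$ be an abelian group of odd order with exponent greater than $2$. Then $\mathrm{Aut}(L_M)\cong S_3\times\mathrm{Aut}(M)$ and $\mathrm{Half}(L_M)\cong C_2\times S_3\times\mathrm{Aut}(M)$.
   Context: Let $K=\{1,a,b,c\}$ be the Klein four-group. Set $L_M=K\times M$ with the operation $(A,x)*(B,y)=(AB,xy)$ if $B=1$, and $(A,x)*(B,y)=(AB,x^{-1}y)$ if $B\neq 1$. $\mathrm{Half}(L_M)$ denotes the group of half-automorphisms of $L_M$, i.e. bijections $f$ with $f(XY)\in\{f(X)f(Y),f(Y)f(X)\}$ for all $X,Y$. $S_3$ is the symmetric group on three letters and $C_2$ the cyclic group of order $2$. *)

theory Defs
  imports "HOL-Algebra.Algebra"
begin

datatype klein = K1 | Ka | Kb | Kc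

fun klein_mult :: "klein \<Rightarrow> klein \<Rightarrow> klein" where
  "klein_mult K1 y = y"
| "klein_mult x K1 = x"
| "klein_mult Ka Ka = K1" | "klein_mult Ka Kb = Kc" | "klein_mult Ka Kc = Kb"
| "klein_mult Kb Ka = Kc" | "klein_mult Kb Kb = K1" | "klein_mult Kb Kc = Ka"
| "klein_mult Kc Ka = Kb" | "klein_mult Kc Kb = Ka" | "klein_mult Kc Kc = K1"

definition L_loop :: "('a, 'b) monoid_scheme \<Rightarrow> (klein \<times> 'a) monoid" where
  "L_loop M = \<lparr> carrier = UNIV \<times> carrier M,
     monoid.mult = (\<lambda>p q. (klein_mult (fst p) (fst q),
               if fst q = K1 then snd p \<otimes>\<^bsub>M\<^esub> snd q
               else inv\<^bsub>M\<^esub> (snd p) \<otimes>\<^bsub>M\<^esub> snd q)),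
     one = (K1, \<one>\<^bsub>M\<^esub>) \<rparr>"

text \<open>Half-automorphisms: bijections f of the carrier with f(XY) \<in> {f(X)f(Y), f(Y)f(X)}.
  As for the library's automorphism group, maps are taken extensional on the carrier.\<close>
definition half_auto :: "('a, 'b) monoid_scheme \<Rightarrow> ('a \<Rightarrow> 'a) set" where
  "half_auto G = {f \<in> Bij (carrier G). \<forall>x\<in>carrier G. \<forall>y\<in>carrier G.
      f (x \<otimes>\<^bsub>G\<^esub> y) = f x \<otimes>\<^bsub>G\<^esub> f y \<or> f (x \<otimes>\<^bsub>G\<^esub> y) = f y \<otimes>\<^bsub>G\<^esub> f x}"

definition HalfGroup :: "('a, 'b) monoid_scheme \<Rightarrow> ('a \<Rightarrow> 'a) monoid" where
  "HalfGroup G = BijGroup (carrier G) \<lparr>carrier := half_auto G\<rparr>"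

definition group_exponent :: "('a, 'b) monoid_scheme \<Rightarrow> nat" where
  "group_exponent G = (LEAST n. 0 < n \<and> (\<forall>x\<in>carrier G. x [^]\<^bsub>G\<^esub> n = \<one>\<^bsub>G\<^esub>))"

end

theory Submission
  imports Defs
begin

definition kl :: "nat \<Rightarrow> klein" where "kl n = (if n = 1 then Ka else if n = 2 then Kb else Kc)"
fun kidx :: "klein \<Rightarrow> nat" where "kidx K1 = 0" | "kidx Ka = 1" | "kidx Kb = 2" | "kidx Kc = 3"
definition kp :: "(nat \<Rightarrow> nat) \<Rightarrow> klein \<Rightarrow> klein" where
  "kp p A = (if A = K1 then K1 else kl (p (kidx A)))"

lemma klein_UNIV: "(UNIV :: klein set) = {K1,Ka,Kb,Kc}"
  using klein.exhaust by auto
lemma finite_klein[simp]: "finite (UNIV::klein set)"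
  by (simp add: klein_UNIV)

lemma km_comm: "klein_mult A B = klein_mult B A" by (cases A; cases B; simp)
lemma km_self[simp]: "klein_mult A A = K1" by (cases A; simp)
lemma km_K1_right[simp]: "klein_mult A K1 = A" by (cases A; simp)
lemma km_eq_K1: "klein_mult A B = K1 \<longleftrightarrow> A = B" by (cases A; cases B; simp)
lemma km_third: "A \<noteq> K1 \<Longrightarrow> B \<noteq> K1 \<Longrightarrow> A \<noteq> B \<Longrightarrow>
   klein_mult A B \<noteq> K1 \<and> klein_mult A B \<noteq> A \<and> klein_mult A B \<noteq> B"
  by (cases A; cases B; simp)
lemma km_distinct: "P \<noteq> K1 \<Longrightarrow> Q \<noteq> K1 \<Longrightarrow> R \<noteq> K1 \<Longrightarrow> P \<noteq> Q \<Longrightarrow> P \<noteq> R \<Longrightarrow> Q \<noteq> R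
   \<Longrightarrow> klein_mult P Q = R"
  by (cases P; cases Q; cases R; simp)
lemma km_surj: "D \<noteq> K1 \<Longrightarrow> \<exists>A B. A \<noteq> K1 \<and> B \<noteq> K1 \<and> A \<noteq> B \<and> klein_mult A B = D"
  apply (cases D)
  apply simp
  apply (rule exI[of _ Kb], rule exI[of _ Kc], simp)
  apply (rule exI[of _ Ka], rule exI[of _ Kc], simp)
  apply (rule exI[of _ Ka], rule exI[of _ Kb], simp)
  done

lemma kidx_range: "A \<noteq> K1 \<Longrightarrow> kidx A \<in> {1..3}" by (cases A; simp)
lemma kl_kidx: "A \<noteq> K1 \<Longrightarrow> kl (kidx A) = A" by (cases A; simp add: kl_def)
lemma kidx_kl: "n \<in> {1..3} \<Longrightarrow> kidx (kl n) = n" by (auto simp: kl_def)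
lemma kl_ne[simp]: "kl n \<noteq> K1" by (simp add: kl_def)
lemma kl_inj: "n \<in> {1..3} \<Longrightarrow> m \<in> {1..3} \<Longrightarrow> kl n = kl m \<Longrightarrow> n = m"
  by (metis kidx_kl)

lemma kp_K1[simp]: "kp p K1 = K1" by (simp add: kp_def)
lemma kp_eq_K1[simp]: "kp p A = K1 \<longleftrightarrow> A = K1" by (simp add: kp_def)

lemma kp_inj: assumes p: "p permutes {1..3}" and "kp p A = kp p B" shows "A = B"
proof (cases "A = K1 \<or> B = K1")
  case True then show ?thesis using assms(2) kp_eq_K1 by metis
next
  case False
  hence "kl (p (kidx A)) = kl (p (kidx B))" using assms(2) by (simp add: kp_def)
  hence "p (kidx A) = p (kidx B)" using kl_inj permutes_in_image[OF p] kidx_range False by blast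
  hence "kidx A = kidx B" using permutes_inj[OF p] by (simp add: inj_eq)
  thus ?thesis using kl_kidx False by metis
qed

lemma kp_mult: assumes p: "p permutes {1..3}"
  shows "kp p (klein_mult A B) = klein_mult (kp p A) (kp p B)"
proof (cases "A = K1 \<or> B = K1 \<or> A = B")
  case True then show ?thesis by (auto simp: km_comm)
next
  case False
  let ?C = "klein_mult A B"
  have C: "?C \<noteq> K1" "?C \<noteq> A" "?C \<noteq> B" using km_third False by auto
  show ?thesis
  proof (rule sym, rule km_distinct)
    have i: "\<And>U V. U \<noteq> V \<Longrightarrow> kp p U \<noteq> kp p V" using kp_inj[OF p] by blast
    show "kp p A \<noteq> K1" "kp p B \<noteq> K1" "kp p ?C \<noteq> K1" using False C by simp_all
    show "kp p A \<noteq> kp p B" "kp p A \<noteq> kp p ?C" "kp p B \<noteq> kp p ?C"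
      using False C by (auto intro!: i)
  qed
qed

lemma kp_comp: assumes p: "p permutes {1..3}" and q: "q permutes {1..3}"
  shows "kp (p \<circ> q) = kp p \<circ> kp q"
proof
  fix A show "kp (p \<circ> q) A = (kp p \<circ> kp q) A"
    using kidx_kl permutes_in_image[OF q] kidx_range by (simp add: kp_def)
qed

lemma kp_eq: assumes p: "p permutes {1..3}" and q: "q permutes {1..3}" and e: "kp p = kp q"
  shows "p = q"
proof
  fix n show "p n = q n"
  proof (cases "n \<in> {1..3}")
    case True
    hence "kp p (kl n) = kp q (kl n)" using e by simp
    hence "kl (p n) = kl (q n)" using True kidx_kl by (simp add: kp_def)
    thus ?thesis using kl_inj permutes_in_image[OF p] permutes_in_image[OF q] True by blast
  next
    case False thus ?thesis using permutes_not_in[OF p] permutes_not_in[OF q] by simp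
  qed
qed

lemma kp_exists: assumes "\<pi> K1 = K1" and ne: "\<And>A. A \<noteq> K1 \<Longrightarrow> \<pi> A \<noteq> K1"
  and inj: "\<And>A B. A \<noteq> K1 \<Longrightarrow> B \<noteq> K1 \<Longrightarrow> \<pi> A = \<pi> B \<Longrightarrow> A = B"
  shows "\<exists>p. p permutes {1..3} \<and> kp p = \<pi>"
proof -
  define p where "p = (\<lambda>n. if n \<in> {1..3} then kidx (\<pi> (kl n)) else n)"
  have img: "p ` {1..3} \<subseteq> {1..3}" using ne kidx_range by (auto simp: p_def)
  have inj_p: "inj_on p {1..3}"
  proof (rule inj_onI)
    fix n m assume n: "n \<in> {1..3::nat}" and m: "m \<in> {1..3::nat}" and e: "p n = p m"
    hence "kidx (\<pi> (kl n)) = kidx (\<pi> (kl m))" by (simp add: p_def)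
    hence "\<pi> (kl n) = \<pi> (kl m)" using kl_kidx ne kl_ne by metis
    hence "kl n = kl m" using inj kl_ne by blast
    thus "n = m" using kl_inj n m by blast
  qed
  have "p ` {1..3} = {1..3}" using endo_inj_surj[OF _ img inj_p] by simp
  hence "bij_betw p {1..3} {1..3}" using inj_p by (simp add: bij_betw_def)
  hence pp: "p permutes {1..3}" by (rule bij_imp_permutes) (auto simp add: p_def)
  have "kp p = \<pi>"
  proof
    fix A show "kp p A = \<pi> A"
    proof (cases "A = K1")
      case True thus ?thesis using assms(1) by simp
    next
      case False thus ?thesis using kidx_range[OF False] kl_kidx ne
        by (simp add: kp_def p_def)
    qed
  qed
  thus ?thesis using pp by blast
qed


locale oddM = comm_group G for G (structure) +
  fixes w
  assumes fin: "finite (carrier G)" and odd_ord: "odd (order G)"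
    and w_in: "w \<in> carrier G" and w_ne: "w \<noteq> \<one>"

lemma L_carrier[simp]: "carrier (L_loop M) = UNIV \<times> carrier M"
  by (simp add: L_loop_def)
lemma L_mult[simp]: "(A, x) \<otimes>\<^bsub>L_loop M\<^esub> (B, y) =
  (klein_mult A B, if B = K1 then x \<otimes>\<^bsub>M\<^esub> y else inv\<^bsub>M\<^esub> x \<otimes>\<^bsub>M\<^esub> y)"
  by (simp add: L_loop_def)

context oddM begin

lemma sq1: assumes x: "x \<in> carrier G" and "x \<otimes> x = \<one>" shows "x = \<one>"
proof -
  have "x [^] (2::nat) = \<one>" using assms by (simp add: numeral_2_eq_2)
  hence "ord x dvd 2" using pow_eq_id x by blast
  moreover have "ord x dvd order G" using ord_dvd_group_order x by blast
  ultimately have "ord x dvd gcd 2 (order G)" by simp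
  moreover have "gcd 2 (order G) = 1" using odd_ord
    by (metis coprime_iff_gcd_eq_1 coprime_left_2_iff_odd)
  ultimately have "ord x = 1" by simp
  thus ?thesis using ord_eq_1 x by blast
qed

lemma sq_inj: assumes xy: "x \<in> carrier G" "y \<in> carrier G" and e: "x \<otimes> x = y \<otimes> y" shows "x = y"
proof -
  have "(x \<otimes> inv y) \<otimes> (x \<otimes> inv y) = (x \<otimes> x) \<otimes> inv (y \<otimes> y)"
    using xy by (simp add: m_ac inv_mult)
  also have "\<dots> = \<one>" using xy e by simp
  finally have "x \<otimes> inv y = \<one>" using sq1[of "x \<otimes> inv y"] xy by simp
  hence "inv (inv y) = x" using xy by (intro inv_equality) simp_all
  thus ?thesis using xy by simp
qed

lemma inv_self: assumes "x \<in> carrier G" "inv x = x" shows "x = \<one>"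
proof -
  have "x \<otimes> x = \<one>" using assms r_inv[of x] by simp
  thus ?thesis using sq1 assms by blast
qed

lemma cancel_t: assumes a: "t \<in> carrier G" "a \<in> carrier G" "b \<in> carrier G"
  shows "inv (t \<otimes> a) \<otimes> (t \<otimes> b) = inv a \<otimes> b"
proof -
  have c: "inv t \<otimes> (t \<otimes> b) = b" using a by (simp add: m_assoc[symmetric])
  have "inv (t \<otimes> a) \<otimes> (t \<otimes> b) = (inv a \<otimes> inv t) \<otimes> (t \<otimes> b)" using a by (simp add: inv_mult_group)
  also have "\<dots> = inv a \<otimes> (inv t \<otimes> (t \<otimes> b))" using a by (simp add: m_assoc)
  also have "\<dots> = inv a \<otimes> b" using c by simp
  finally show ?thesis .
qed

definition sg :: "int \<Rightarrow> klein \<Rightarrow> 'a \<Rightarrow> 'a" where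
  "sg e A z = (if e = 1 \<and> A \<noteq> K1 then inv z else z)"

definition PhiH :: "int \<Rightarrow> (nat \<Rightarrow> nat) \<Rightarrow> ('a \<Rightarrow> 'a) \<Rightarrow> (klein \<times> 'a \<Rightarrow> klein \<times> 'a)" where
  "PhiH e p \<phi> = (\<lambda>P. if snd P \<in> carrier G then (kp p (fst P), sg e (fst P) (\<phi> (snd P))) else undefined)"

lemma sg_closed[simp]: "z \<in> carrier G \<Longrightarrow> sg e A z \<in> carrier G"
  by (simp add: sg_def)

lemma auto_hom: "\<phi> \<in> auto G \<Longrightarrow> group_hom G G \<phi>"
  by (simp add: auto_def group_hom_def group_hom_axioms_def is_group)

lemma auto_props: assumes ph: "\<phi> \<in> auto G"
  shows "\<And>x. x \<in> carrier G \<Longrightarrow> \<phi> x \<in> carrier G"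
    and "\<And>x y. x \<in> carrier G \<Longrightarrow> y \<in> carrier G \<Longrightarrow> \<phi> (x \<otimes> y) = \<phi> x \<otimes> \<phi> y"
    and "\<And>x. x \<in> carrier G \<Longrightarrow> \<phi> (inv x) = inv (\<phi> x)"
    and "inj_on \<phi> (carrier G)" and "\<phi> ` carrier G = carrier G"
    and "\<phi> \<in> extensional (carrier G)"
proof -
  have h: "\<phi> \<in> hom G G" and b: "\<phi> \<in> Bij (carrier G)" using ph by (simp_all add: auto_def)
  show "\<And>x. x \<in> carrier G \<Longrightarrow> \<phi> x \<in> carrier G" using h by (rule hom_in_carrier)
  show "\<And>x y. x \<in> carrier G \<Longrightarrow> y \<in> carrier G \<Longrightarrow> \<phi> (x \<otimes> y) = \<phi> x \<otimes> \<phi> y"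
    using h by (rule hom_mult)
  show "\<And>x. x \<in> carrier G \<Longrightarrow> \<phi> (inv x) = inv (\<phi> x)"
    by (rule group_hom.hom_inv[OF auto_hom[OF ph]])
  have bb: "bij_betw \<phi> (carrier G) (carrier G)" using b by (simp add: Bij_def)
  show "inj_on \<phi> (carrier G)" using bb by (rule bij_betw_imp_inj_on)
  show "\<phi> ` carrier G = carrier G" using bb by (rule bij_betw_imp_surj_on)
  show "\<phi> \<in> extensional (carrier G)" using b by (rule Bij_imp_extensional)
qed

lemma PhiH_app: "x \<in> carrier G \<Longrightarrow> PhiH e p \<phi> (A, x) = (kp p A, sg e A (\<phi> x))"
  by (simp add: PhiH_def)

lemma PhiH_Bij: assumes p: "p permutes {1..3}" and ph: "\<phi> \<in> auto G"
  shows "PhiH e p \<phi> \<in> Bij (carrier (L_loop G))"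
proof -
  have inj: "inj_on (PhiH e p \<phi>) (UNIV \<times> carrier G)"
  proof (rule inj_onI, clarify)
    fix A x B y assume x: "x \<in> carrier G" and y: "y \<in> carrier G"
      and e: "PhiH e p \<phi> (A, x) = PhiH e p \<phi> (B, y)"
    have "kp p A = kp p B" using e x y by (simp add: PhiH_app)
    hence AB: "A = B" by (rule kp_inj[OF p])
    hence s: "sg e A (\<phi> x) = sg e A (\<phi> y)" using e x y by (simp add: PhiH_app)
    have u: "\<phi> x \<in> carrier G" "\<phi> y \<in> carrier G" using x y auto_props(1)[OF ph] by auto
    have "\<phi> x = \<phi> y"
    proof (cases "e = 1 \<and> A \<noteq> K1")
      case True
      hence "inv (\<phi> x) = inv (\<phi> y)" using s by (simp add: sg_def)
      hence "inv (inv (\<phi> x)) = inv (inv (\<phi> y))" by simp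
      thus ?thesis using u by simp
    next
      case False
      have "sg e A z = z" for z by (simp only: sg_def if_not_P[OF False])
      thus ?thesis using s by simp
    qed
    thus "A = B \<and> x = y" using AB auto_props(4)[OF ph] x y by (simp add: inj_on_def)
  qed
  have img: "PhiH e p \<phi> ` (UNIV \<times> carrier G) \<subseteq> UNIV \<times> carrier G"
    using auto_props(1)[OF ph] by (auto simp: PhiH_app)
  have fin2: "finite ((UNIV::klein set) \<times> carrier G)" by (rule finite_cartesian_product[OF finite_klein fin])
  have "PhiH e p \<phi> ` (UNIV \<times> carrier G) = UNIV \<times> carrier G"
    by (rule endo_inj_surj[OF fin2 img inj])
  moreover have "PhiH e p \<phi> \<in> extensional (UNIV \<times> carrier G)"
    by (auto simp: extensional_def PhiH_def)
  ultimately show ?thesis using inj by (simp add: Bij_def bij_betw_def)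
qed

lemma PhiH_mult:
  assumes p: "p permutes {1..3}" and ph: "\<phi> \<in> auto G"
    and P: "P \<in> carrier (L_loop G)" and Q: "Q \<in> carrier (L_loop G)"
  shows "PhiH e p \<phi> (P \<otimes>\<^bsub>L_loop G\<^esub> Q) =
      (if e = 1 then PhiH e p \<phi> Q \<otimes>\<^bsub>L_loop G\<^esub> PhiH e p \<phi> P else PhiH e p \<phi> P \<otimes>\<^bsub>L_loop G\<^esub> PhiH e p \<phi> Q)
    \<or> PhiH e p \<phi> (P \<otimes>\<^bsub>L_loop G\<^esub> Q) = PhiH e p \<phi> P \<otimes>\<^bsub>L_loop G\<^esub> PhiH e p \<phi> Q"
proof -
  obtain A x B y where XY: "P = (A, x)" "Q = (B, y)" by fastforce
  have x: "x \<in> carrier G" and y: "y \<in> carrier G" using P Q XY by auto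
  note hp = auto_props[OF ph]
  have u: "\<phi> x \<in> carrier G" and v: "\<phi> y \<in> carrier G" using hp x y by auto
  have km: "kp p (klein_mult A B) = klein_mult (kp p A) (kp p B)" by (rule kp_mult[OF p])
  have km': "kp p (klein_mult A B) = klein_mult (kp p B) (kp p A)" using km km_comm by metis
  have i1: "inv (inv (\<phi> x) \<otimes> \<phi> y) = inv (\<phi> y) \<otimes> \<phi> x" using u v by (simp add: inv_mult_group)
  have i2: "inv (\<phi> x \<otimes> \<phi> y) = inv (\<phi> y) \<otimes> inv (\<phi> x)" using u v by (simp add: inv_mult_group)
  have i3: "inv (\<phi> x) \<otimes> \<phi> y = \<phi> y \<otimes> inv (\<phi> x)" using u v by (simp add: m_comm)
  have i4: "inv (\<phi> y) \<otimes> \<phi> x = \<phi> x \<otimes> inv (\<phi> y)" using u v by (simp add: m_comm)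
  have phm: "\<phi> (x \<otimes> y) = \<phi> x \<otimes> \<phi> y" "\<phi> (inv x \<otimes> y) = inv (\<phi> x) \<otimes> \<phi> y"
    using hp(2,3) x y by auto
  show ?thesis
  proof (cases "e = 1")
    case False
    thus ?thesis using x y km phm by (simp add: XY PhiH_app sg_def)
  next
    case e: True
    show ?thesis
    proof (cases "A = K1")
      case A: True
      show ?thesis
      proof (cases "B = K1")
        case True thus ?thesis using A x y phm by (simp add: XY PhiH_app sg_def)
      next
        case False thus ?thesis using A e x y km' phm i1
          by (intro disjI1) (simp add: XY PhiH_app sg_def)
      qed
    next
      case A: False
      show ?thesis
      proof (cases "B = K1")
        case True thus ?thesis using A e x y km' phm i2
          by (intro disjI1) (simp add: XY PhiH_app sg_def)
      next
        case B: False
        show ?thesis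
        proof (cases "A = B")
          case True thus ?thesis using A B e x y u v phm i3
            by (intro disjI1) (simp add: XY PhiH_app sg_def)
        next
          case False
          hence "klein_mult A B \<noteq> K1" by (simp add: km_eq_K1)
          thus ?thesis using A B e x y u v km phm i1 i4
            by (intro disjI2) (simp add: XY PhiH_app sg_def)
        qed
      qed
    qed
  qed
qed

lemma PhiH_half: assumes p: "p permutes {1..3}" and ph: "\<phi> \<in> auto G"
  shows "PhiH e p \<phi> \<in> half_auto (L_loop G)"
proof -
  have "\<forall>P\<in>carrier (L_loop G). \<forall>Q\<in>carrier (L_loop G).
     PhiH e p \<phi> (P \<otimes>\<^bsub>L_loop G\<^esub> Q) = PhiH e p \<phi> P \<otimes>\<^bsub>L_loop G\<^esub> PhiH e p \<phi> Q \<or>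
     PhiH e p \<phi> (P \<otimes>\<^bsub>L_loop G\<^esub> Q) = PhiH e p \<phi> Q \<otimes>\<^bsub>L_loop G\<^esub> PhiH e p \<phi> P"
  proof (intro ballI)
    fix P Q assume P: "P \<in> carrier (L_loop G)" and Q: "Q \<in> carrier (L_loop G)"
    note h = PhiH_mult[OF p ph P Q, of e]
    show "PhiH e p \<phi> (P \<otimes>\<^bsub>L_loop G\<^esub> Q) = PhiH e p \<phi> P \<otimes>\<^bsub>L_loop G\<^esub> PhiH e p \<phi> Q \<or>
     PhiH e p \<phi> (P \<otimes>\<^bsub>L_loop G\<^esub> Q) = PhiH e p \<phi> Q \<otimes>\<^bsub>L_loop G\<^esub> PhiH e p \<phi> P"
    proof (cases "e = 1")
      case True
      hence "e = 1" .
      with h show ?thesis by (simp only: if_True simp_thms) blast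
    next
      case False
      with h show ?thesis by (simp only: if_False simp_thms)
    qed
  qed
  thus ?thesis using PhiH_Bij[OF p ph] unfolding half_auto_def mem_Collect_eq by (intro conjI)
qed

lemma PhiH_auto: assumes p: "p permutes {1..3}" and ph: "\<phi> \<in> auto G"
  shows "PhiH 0 p \<phi> \<in> auto (L_loop G)"
proof -
  have f: "PhiH 0 p \<phi> \<in> carrier (L_loop G) \<rightarrow> carrier (L_loop G)"
    using PhiH_Bij[OF p ph] by (simp add: Bij_imp_funcset)
  have m: "\<forall>P\<in>carrier (L_loop G). \<forall>Q\<in>carrier (L_loop G). PhiH 0 p \<phi> (P \<otimes>\<^bsub>L_loop G\<^esub> Q)
      = PhiH 0 p \<phi> P \<otimes>\<^bsub>L_loop G\<^esub> PhiH 0 p \<phi> Q"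
  proof (intro ballI)
    fix P Q assume P: "P \<in> carrier (L_loop G)" and Q: "Q \<in> carrier (L_loop G)"
    show "PhiH 0 p \<phi> (P \<otimes>\<^bsub>L_loop G\<^esub> Q) = PhiH 0 p \<phi> P \<otimes>\<^bsub>L_loop G\<^esub> PhiH 0 p \<phi> Q"
      using PhiH_mult[OF p ph P Q, of 0] by (simp only: zero_neq_one if_False simp_thms)
  qed
  have "PhiH 0 p \<phi> \<in> hom (L_loop G) (L_loop G)"
    unfolding hom_def mem_Collect_eq by (rule conjI[OF f m])
  thus ?thesis unfolding auto_def using PhiH_Bij[OF p ph] by (rule IntI)
qed

end

lemma L_mult': "P \<otimes>\<^bsub>L_loop M\<^esub> Q =
  (klein_mult (fst P) (fst Q), if fst Q = K1 then snd P \<otimes>\<^bsub>M\<^esub> snd Q else inv\<^bsub>M\<^esub> (snd P) \<otimes>\<^bsub>M\<^esub> snd Q)"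
  by (simp add: L_loop_def)

context oddM begin

lemma canc1: "x \<in> carrier G \<Longrightarrow> y \<in> carrier G \<Longrightarrow> x \<otimes> (inv x \<otimes> y) = y"
  by (simp add: m_assoc[symmetric])
lemma canc2: "x \<in> carrier G \<Longrightarrow> y \<in> carrier G \<Longrightarrow> inv x \<otimes> (x \<otimes> y) = y"
  by (simp add: m_assoc[symmetric])

lemma inv_swap_eq: assumes ab: "a \<in> carrier G" "b \<in> carrier G" and e: "inv a \<otimes> b = inv b \<otimes> a"
  shows "a = b"
proof -
  let ?d = "inv a \<otimes> b"
  have "?d \<otimes> ?d = ?d \<otimes> (inv b \<otimes> a)" using e by simp
  also have "\<dots> = inv a \<otimes> (b \<otimes> (inv b \<otimes> a))" using ab by (simp add: m_assoc)
  also have "\<dots> = \<one>" using ab by (simp add: canc1)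
  finally have "?d = \<one>" using sq1[of ?d] ab by simp
  hence "a \<otimes> ?d = a" using ab by simp
  thus ?thesis using ab by (simp add: canc1)
qed

lemma three: assumes w': "w' \<in> carrier G" "w' \<noteq> \<one>"
  and c: "\<alpha> \<in> carrier G" "\<beta> \<in> carrier G" "\<gamma> \<in> carrier G"
  and h: "\<And>u. u \<in> {\<one>, w', inv w'} \<Longrightarrow> \<gamma> = \<alpha> \<otimes> (inv u \<otimes> inv u) \<or> \<gamma> = \<beta> \<otimes> (u \<otimes> u)"
  shows False
proof -
  have U: "{\<one>, w', inv w'} \<subseteq> carrier G" using w' by auto
  have P1: "u1 = u2" if u: "u1 \<in> {\<one>, w', inv w'}" "u2 \<in> {\<one>, w', inv w'}"
     and e: "\<gamma> = \<alpha> \<otimes> (inv u1 \<otimes> inv u1)" "\<gamma> = \<alpha> \<otimes> (inv u2 \<otimes> inv u2)" for u1 u2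
  proof -
    have c1: "u1 \<in> carrier G" "u2 \<in> carrier G" using u U by auto
    have "\<alpha> \<otimes> (inv u1 \<otimes> inv u1) = \<alpha> \<otimes> (inv u2 \<otimes> inv u2)" using e by simp
    hence "inv u1 \<otimes> inv u1 = inv u2 \<otimes> inv u2" using c c1 by simp
    with c1 have "inv u1 = inv u2" by (rule sq_inj[OF inv_closed inv_closed])
    hence "inv (inv u1) = inv (inv u2)" by simp
    thus ?thesis using c1(1,2) by simp
  qed
  have P2: "u1 = u2" if u: "u1 \<in> {\<one>, w', inv w'}" "u2 \<in> {\<one>, w', inv w'}"
     and e: "\<gamma> = \<beta> \<otimes> (u1 \<otimes> u1)" "\<gamma> = \<beta> \<otimes> (u2 \<otimes> u2)" for u1 u2
  proof -
    have c1: "u1 \<in> carrier G" "u2 \<in> carrier G" using u U by auto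
    have "\<beta> \<otimes> (u1 \<otimes> u1) = \<beta> \<otimes> (u2 \<otimes> u2)" using e by simp
    hence "u1 \<otimes> u1 = u2 \<otimes> u2" using c c1 by simp
    with c1 show ?thesis by (rule sq_inj)
  qed
  have d1: "\<one> \<noteq> w'" using w' by simp
  have d2: "\<one> \<noteq> inv w'"
  proof
    assume "\<one> = inv w'" hence "inv \<one> = inv (inv w')" by simp
    thus False using w' by simp
  qed
  have d3: "w' \<noteq> inv w'" using inv_self w' by metis
  have h1: "\<gamma> = \<alpha> \<otimes> (inv \<one> \<otimes> inv \<one>) \<or> \<gamma> = \<beta> \<otimes> (\<one> \<otimes> \<one>)" by (rule h) simp
  have h2: "\<gamma> = \<alpha> \<otimes> (inv w' \<otimes> inv w') \<or> \<gamma> = \<beta> \<otimes> (w' \<otimes> w')" by (rule h) simp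
  have h3: "\<gamma> = \<alpha> \<otimes> (inv (inv w') \<otimes> inv (inv w')) \<or> \<gamma> = \<beta> \<otimes> (inv w' \<otimes> inv w')" by (rule h) simp
  have m1: "\<one> \<in> {\<one>, w', inv w'}" "w' \<in> {\<one>, w', inv w'}" "inv w' \<in> {\<one>, w', inv w'}" by simp_all
  from h1 show False
  proof
    assume a1: "\<gamma> = \<alpha> \<otimes> (inv \<one> \<otimes> inv \<one>)"
    from h2 show False
    proof
      assume a2: "\<gamma> = \<alpha> \<otimes> (inv w' \<otimes> inv w')"
      show False using P1[OF m1(1) m1(2) a1 a2] d1 by simp
    next
      assume b2: "\<gamma> = \<beta> \<otimes> (w' \<otimes> w')"
      from h3 show False
      proof
        assume a3: "\<gamma> = \<alpha> \<otimes> (inv (inv w') \<otimes> inv (inv w'))"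
        show False using P1[OF m1(1) m1(3) a1 a3] d2 by simp
      next
        assume b3: "\<gamma> = \<beta> \<otimes> (inv w' \<otimes> inv w')"
        show False using P2[OF m1(2) m1(3) b2 b3] d3 by simp
      qed
    qed
  next
    assume b1: "\<gamma> = \<beta> \<otimes> (\<one> \<otimes> \<one>)"
    from h2 show False
    proof
      assume a2: "\<gamma> = \<alpha> \<otimes> (inv w' \<otimes> inv w')"
      from h3 show False
      proof
        assume a3: "\<gamma> = \<alpha> \<otimes> (inv (inv w') \<otimes> inv (inv w'))"
        show False using P1[OF m1(2) m1(3) a2 a3] d3 by simp
      next
        assume b3: "\<gamma> = \<beta> \<otimes> (inv w' \<otimes> inv w')"
        show False using P2[OF m1(1) m1(3) b1 b3] d2 by simp
      qed
    next
      assume b2: "\<gamma> = \<beta> \<otimes> (w' \<otimes> w')"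
      show False using P2[OF m1(1) m1(2) b1 b2] d1 by simp
    qed
  qed
qed

lemma two: assumes z': "z' \<in> carrier G" "z' \<noteq> \<one>"
  and c: "a \<in> carrier G" "b \<in> carrier G" "c \<in> carrier G"
  and h: "\<And>z. z \<in> {\<one>, z'} \<Longrightarrow> c \<otimes> inv z = inv (a \<otimes> z) \<otimes> b \<or> c \<otimes> inv z = inv b \<otimes> (a \<otimes> z)"
  shows "c = inv a \<otimes> b"
proof -
  have E1: "c = inv a \<otimes> b" if z: "z \<in> carrier G" and e: "c \<otimes> inv z = inv (a \<otimes> z) \<otimes> b" for z
  proof -
    have "inv (a \<otimes> z) \<otimes> b = (inv a \<otimes> b) \<otimes> inv z" using z c by (simp add: inv_mult m_ac)
    hence "c \<otimes> inv z = (inv a \<otimes> b) \<otimes> inv z" using e by simp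
    thus ?thesis using z c by simp
  qed
  have E2: "c = (inv b \<otimes> a) \<otimes> (z \<otimes> z)" if z: "z \<in> carrier G" and e: "c \<otimes> inv z = inv b \<otimes> (a \<otimes> z)" for z
  proof -
    have "c = (c \<otimes> inv z) \<otimes> z" using z c by (simp add: m_assoc)
    also have "\<dots> = (inv b \<otimes> (a \<otimes> z)) \<otimes> z" using e by simp
    also have "\<dots> = (inv b \<otimes> a) \<otimes> (z \<otimes> z)" using z c by (simp add: m_assoc)
    finally show ?thesis .
  qed
  have h1: "c \<otimes> inv \<one> = inv (a \<otimes> \<one>) \<otimes> b \<or> c \<otimes> inv \<one> = inv b \<otimes> (a \<otimes> \<one>)" by (rule h) simp
  have h2: "c \<otimes> inv z' = inv (a \<otimes> z') \<otimes> b \<or> c \<otimes> inv z' = inv b \<otimes> (a \<otimes> z')" by (rule h) simp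
  show ?thesis
  proof (rule ccontr)
    assume n: "c \<noteq> inv a \<otimes> b"
    from h1 have e1: "c = (inv b \<otimes> a) \<otimes> (\<one> \<otimes> \<one>)"
    proof
      assume "c \<otimes> inv \<one> = inv (a \<otimes> \<one>) \<otimes> b"
      hence "c = inv a \<otimes> b" by (rule E1[OF one_closed])
      thus ?thesis by (rule notE[OF n])
    next
      assume "c \<otimes> inv \<one> = inv b \<otimes> (a \<otimes> \<one>)"
      thus ?thesis by (rule E2[OF one_closed])
    qed
    from h2 have e2: "c = (inv b \<otimes> a) \<otimes> (z' \<otimes> z')"
    proof
      assume "c \<otimes> inv z' = inv (a \<otimes> z') \<otimes> b"
      hence "c = inv a \<otimes> b" by (rule E1[OF z'(1)])
      thus ?thesis by (rule notE[OF n])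
    next
      assume "c \<otimes> inv z' = inv b \<otimes> (a \<otimes> z')"
      thus ?thesis by (rule E2[OF z'(1)])
    qed
    have "(inv b \<otimes> a) \<otimes> (z' \<otimes> z') = (inv b \<otimes> a) \<otimes> (\<one> \<otimes> \<one>)" using e1 e2 by simp
    hence "z' \<otimes> z' = \<one> \<otimes> \<one>" using c z' by (simp del: l_one r_one)
    with z'(1) have "z' = \<one>" by (rule sq_inj[OF _ one_closed])
    thus False using z' by simp
  qed
qed

end

context oddM begin

lemma char:
  assumes hf: "f \<in> half_auto (L_loop G)"
  shows "\<exists>e p \<phi>. e \<in> {0,1::int} \<and> p permutes {1..3} \<and> \<phi> \<in> auto G \<and> f = PhiH e p \<phi>"
proof -
  let ?L = "L_loop G"
  let ?S = "(UNIV::klein set) \<times> carrier G"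
  have fB: "f \<in> Bij ?S" using hf by (simp add: half_auto_def)
  have fbij: "bij_betw f ?S ?S" using fB by (simp add: Bij_def)
  have fext: "f \<in> extensional ?S" using fB by (simp add: Bij_def)
  have H: "\<And>P Q. P \<in> ?S \<Longrightarrow> Q \<in> ?S \<Longrightarrow>
      f (P \<otimes>\<^bsub>?L\<^esub> Q) = f P \<otimes>\<^bsub>?L\<^esub> f Q \<or> f (P \<otimes>\<^bsub>?L\<^esub> Q) = f Q \<otimes>\<^bsub>?L\<^esub> f P"
    using hf unfolding half_auto_def L_carrier by blast
  have finj: "\<And>P Q. P \<in> ?S \<Longrightarrow> Q \<in> ?S \<Longrightarrow> f P = f Q \<Longrightarrow> P = Q"
    using fbij unfolding bij_betw_def inj_on_def by blast
  have fcar: "\<And>P. P \<in> ?S \<Longrightarrow> f P \<in> ?S" by (rule bij_betw_apply[OF fbij])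
  have fsurj: "f ` ?S = ?S" using fbij by (simp add: bij_betw_def)
  define F1 where "F1 A x = fst (f (A,x))" for A x
  define F2 where "F2 A x = snd (f (A,x))" for A x
  have fF: "f (A,x) = (F1 A x, F2 A x)" for A x by (simp add: F1_def F2_def)
  have F2c: "F2 A x \<in> carrier G" if "x \<in> carrier G" for A x
    using fcar[of "(A,x)"] that unfolding F2_def by (auto simp: mem_Times_iff)
  have Hp: "(F1 (klein_mult A B) z, F2 (klein_mult A B) z) =
       (klein_mult (F1 A x) (F1 B y), if F1 B y = K1 then F2 A x \<otimes> F2 B y else inv (F2 A x) \<otimes> F2 B y)
     \<or> (F1 (klein_mult A B) z, F2 (klein_mult A B) z) =
       (klein_mult (F1 B y) (F1 A x), if F1 A x = K1 then F2 B y \<otimes> F2 A x else inv (F2 B y) \<otimes> F2 A x)"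
    if "x \<in> carrier G" "y \<in> carrier G" "z = (if B = K1 then x \<otimes> y else inv x \<otimes> y)" for A B x y z
  proof -
    have "(A,x) \<in> ?S" "(B,y) \<in> ?S" using that by auto
    from H[OF this] show ?thesis unfolding L_mult fF that(3)[symmetric] .
  qed
  have Hfst: "F1 (klein_mult A B) z = klein_mult (F1 A x) (F1 B y)"
    if "x \<in> carrier G" "y \<in> carrier G" "z = (if B = K1 then x \<otimes> y else inv x \<otimes> y)" for A B x y z
    using Hp[of x y z B A, OF that] km_comm[of "F1 A x" "F1 B y"] by auto

  have a1: "F1 K1 \<one> = K1" and b1: "F2 K1 \<one> = \<one>"
  proof -
    have e: "(F1 K1 \<one>, F2 K1 \<one>) =
       (klein_mult (F1 K1 \<one>) (F1 K1 \<one>), if F1 K1 \<one> = K1 then F2 K1 \<one> \<otimes> F2 K1 \<one> else inv (F2 K1 \<one>) \<otimes> F2 K1 \<one>)"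
    proof -
      have z: "\<one> = (if K1 = K1 then \<one> \<otimes> \<one> else inv \<one> \<otimes> \<one>)" by simp
      from Hp[where A=K1, OF one_closed one_closed z] show ?thesis by (simp only: klein_mult.simps disj_absorb)
    qed
    hence e1: "F1 K1 \<one> = klein_mult (F1 K1 \<one>) (F1 K1 \<one>)"
      and e2: "F2 K1 \<one> = (if F1 K1 \<one> = K1 then F2 K1 \<one> \<otimes> F2 K1 \<one> else inv (F2 K1 \<one>) \<otimes> F2 K1 \<one>)"
      by (rule prod.inject[THEN iffD1, THEN conjunct1], rule prod.inject[THEN iffD1, THEN conjunct2])
    show A: "F1 K1 \<one> = K1" using e1 by (metis km_self)
    have "F2 K1 \<one> \<otimes> F2 K1 \<one> = F2 K1 \<one>" using e2 A by (metis (full_types))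
    thus "F2 K1 \<one> = \<one>" using F2c[of \<one> K1] by simp
  qed
  have f1: "f (K1, \<one>) = (K1, \<one>)" using a1 b1 fF by simp

  have nK: "F1 A x \<noteq> K1" if A: "A \<noteq> K1" and x: "x \<in> carrier G" for A x
  proof
    assume a: "F1 A x = K1"
    have "F1 K1 \<one> = klein_mult (F1 A x) (F1 A x) \<and> F2 K1 \<one> = (if F1 A x = K1 then F2 A x \<otimes> F2 A x else inv (F2 A x) \<otimes> F2 A x)"
      using Hp[of x x "\<one>" A A] A x by auto
    hence "F2 A x \<otimes> F2 A x = \<one>" using a b1 by simp
    hence "F2 A x = \<one>" using sq1 F2c[OF x] by blast
    hence "f (A,x) = f (K1,\<one>)" using a f1 fF by simp
    hence "(A,x) = (K1,\<one>)" using finj x by blast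
    thus False using A by simp
  qed
  have K1K: "F1 K1 x = K1" if x: "x \<in> carrier G" for x
  proof (rule ccontr)
    assume a: "F1 K1 x \<noteq> K1"
    have "F1 K1 (x \<otimes> x) = klein_mult (F1 K1 x) (F1 K1 x) \<and> F2 K1 (x \<otimes> x) = (if F1 K1 x = K1 then F2 K1 x \<otimes> F2 K1 x else inv (F2 K1 x) \<otimes> F2 K1 x)"
      using Hp[of x x "x \<otimes> x" K1 K1] x by auto
    hence "F1 K1 (x \<otimes> x) = K1" "F2 K1 (x \<otimes> x) = \<one>" using a F2c[OF x] by simp_all
    hence "f (K1, x \<otimes> x) = f (K1, \<one>)" using f1 fF by simp
    hence "x \<otimes> x = \<one>" using finj x by blast
    hence "x = \<one>" using sq1 x by blast
    thus False using a a1 by simp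
  qed
  have K1iff: "F1 A x = K1 \<longleftrightarrow> A = K1" if "x \<in> carrier G" for A x
    using nK K1K that by blast

  define \<phi> where "\<phi> = (\<lambda>x\<in>carrier G. F2 K1 x)"
  have phi_app: "\<phi> x = F2 K1 x" if "x \<in> carrier G" for x using that by (simp add: \<phi>_def)
  have fK1: "f (K1, x) = (K1, \<phi> x)" if "x \<in> carrier G" for x
    using that fF K1K phi_app by simp
  have phic: "\<phi> x \<in> carrier G" if "x \<in> carrier G" for x using that phi_app F2c by simp
  have phim: "\<phi> (x \<otimes> y) = \<phi> x \<otimes> \<phi> y" if x: "x \<in> carrier G" and y: "y \<in> carrier G" for x y
  proof -
    have "F2 K1 (x \<otimes> y) = F2 K1 x \<otimes> F2 K1 y \<or> F2 K1 (x \<otimes> y) = F2 K1 y \<otimes> F2 K1 x"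
      using Hp[of x y "x \<otimes> y" K1 K1] x y K1K by auto
    thus ?thesis using x y phi_app F2c m_comm[of "F2 K1 x" "F2 K1 y"] by auto
  qed
  have phi_inj: "inj_on \<phi> (carrier G)"
  proof (rule inj_onI)
    fix x y assume x: "x \<in> carrier G" and y: "y \<in> carrier G" and e: "\<phi> x = \<phi> y"
    have "f (K1,x) = f (K1,y)" using fK1 x y e by simp
    thus "x = y" using finj x y by blast
  qed
  have phi_surj: "\<phi> ` carrier G = carrier G"
  proof
    show "\<phi> ` carrier G \<subseteq> carrier G" using phic by auto
    show "carrier G \<subseteq> \<phi> ` carrier G"
    proof
      fix z assume z: "z \<in> carrier G"
      hence "(K1, z) \<in> f ` ?S" using fsurj by simp
      then obtain B y where y: "y \<in> carrier G" and e: "(K1, z) = f (B, y)" by auto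
      have "B = K1" using e K1iff[OF y, of B] fF by (metis fst_conv)
      hence "z = \<phi> y" using e fK1[OF y] by simp
      thus "z \<in> \<phi> ` carrier G" using y by blast
    qed
  qed
  have phi_auto: "\<phi> \<in> auto G"
  proof -
    have "\<phi> \<in> hom G G" unfolding hom_def using phic phim by auto
    moreover have "\<phi> \<in> Bij (carrier G)" unfolding Bij_def
      using phi_inj phi_surj by (auto simp: \<phi>_def bij_betw_def)
    ultimately show ?thesis by (simp add: auto_def)
  qed
  note php = auto_props[OF phi_auto]

  define \<pi> where "\<pi> A = F1 A \<one>" for A
  define t where "t A = F2 A \<one>" for A
  have tc: "t A \<in> carrier G" for A unfolding t_def by (rule F2c) simp
  have dec: "F1 A x = \<pi> A \<and> (F2 A x = t A \<otimes> \<phi> x \<or> F2 A x = t A \<otimes> inv (\<phi> x))"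
    if A: "A \<noteq> K1" and x: "x \<in> carrier G" for A x
  proof -
    have "(F1 A x, F2 A x) = (klein_mult (F1 A \<one>) (F1 K1 x), if F1 K1 x = K1 then F2 A \<one> \<otimes> F2 K1 x else inv (F2 A \<one>) \<otimes> F2 K1 x)
     \<or> (F1 A x, F2 A x) = (klein_mult (F1 K1 x) (F1 A \<one>), if F1 A \<one> = K1 then F2 K1 x \<otimes> F2 A \<one> else inv (F2 K1 x) \<otimes> F2 A \<one>)"
    proof -
      have z: "x = (if K1 = K1 then \<one> \<otimes> x else inv \<one> \<otimes> x)" using x by simp
      from Hp[where A=A and B=K1, OF one_closed x z] show ?thesis by (simp only: km_K1_right)
    qed
    moreover have "F1 K1 x = K1" "F2 K1 x = \<phi> x" "F1 A \<one> \<noteq> K1" using K1K x phi_app nK A by auto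
    ultimately have "(F1 A x, F2 A x) = (\<pi> A, t A \<otimes> \<phi> x) \<or> (F1 A x, F2 A x) = (\<pi> A, inv (\<phi> x) \<otimes> t A)"
      unfolding \<pi>_def t_def by simp
    thus ?thesis using m_comm[OF inv_closed[OF phic[OF x]] tc] by auto
  qed
  have piK: "\<pi> A \<noteq> K1" if "A \<noteq> K1" for A using nK[OF that] by (simp add: \<pi>_def)
  have pi1: "\<pi> K1 = K1" using a1 by (simp add: \<pi>_def)
  have t1: "t K1 = \<one>" using b1 by (simp add: t_def)
  have pinj: "A = B" if A: "A \<noteq> K1" and B: "B \<noteq> K1" and e: "\<pi> A = \<pi> B" for A B
  proof (rule ccontr)
    assume n: "A \<noteq> B"
    have "F1 (klein_mult A B) \<one> = klein_mult (F1 A \<one>) (F1 B \<one>)"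
      by (rule Hfst) simp_all
    hence "F1 (klein_mult A B) \<one> = K1" using e by (simp add: \<pi>_def)
    moreover have "klein_mult A B \<noteq> K1" using n by (simp add: km_eq_K1)
    ultimately show False using nK by fastforce
  qed
  obtain p where p: "p permutes {1..3}" and kpp: "kp p = \<pi>"
    using kp_exists[of \<pi>] pi1 piK pinj by blast

  have sameA: "\<phi> x = \<one> \<or> \<phi> y = \<one>"
    if A: "A \<noteq> K1" and x: "x \<in> carrier G" and y: "y \<in> carrier G"
      and hx: "F2 A x = t A \<otimes> \<phi> x" and hy: "F2 A y = t A \<otimes> inv (\<phi> y)" for A x y
  proof -
    have uc: "\<phi> x \<in> carrier G" and wc: "\<phi> y \<in> carrier G" using x y phic by auto
    have z: "inv x \<otimes> y = (if A = K1 then x \<otimes> y else inv x \<otimes> y)" using A by simp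
    from Hp[where A=A and B=A, OF x y z]
    have h: "(F1 K1 (inv x \<otimes> y), F2 K1 (inv x \<otimes> y)) =
       (klein_mult (F1 A x) (F1 A y), if F1 A y = K1 then F2 A x \<otimes> F2 A y else inv (F2 A x) \<otimes> F2 A y)
     \<or> (F1 K1 (inv x \<otimes> y), F2 K1 (inv x \<otimes> y)) =
       (klein_mult (F1 A y) (F1 A x), if F1 A x = K1 then F2 A y \<otimes> F2 A x else inv (F2 A y) \<otimes> F2 A x)"
      by (simp only: km_self)
    have F1s: "F1 A x \<noteq> K1" "F1 A y \<noteq> K1" using nK A x y by auto
    have lhs: "F2 K1 (inv x \<otimes> y) = inv (\<phi> x) \<otimes> \<phi> y"
      using phi_app[of "inv x \<otimes> y"] php(2,3) x y by simp
    from h F1s have "F2 K1 (inv x \<otimes> y) = inv (F2 A x) \<otimes> F2 A y \<or> F2 K1 (inv x \<otimes> y) = inv (F2 A y) \<otimes> F2 A x"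
      by auto
    hence d: "inv (\<phi> x) \<otimes> \<phi> y = inv (t A \<otimes> \<phi> x) \<otimes> (t A \<otimes> inv (\<phi> y))
       \<or> inv (\<phi> x) \<otimes> \<phi> y = inv (t A \<otimes> inv (\<phi> y)) \<otimes> (t A \<otimes> \<phi> x)"
      unfolding lhs hx hy .
    have c1: "inv (t A \<otimes> \<phi> x) \<otimes> (t A \<otimes> inv (\<phi> y)) = inv (\<phi> x) \<otimes> inv (\<phi> y)"
      by (rule cancel_t) (simp_all add: tc uc wc)
    have c2: "inv (t A \<otimes> inv (\<phi> y)) \<otimes> (t A \<otimes> \<phi> x) = \<phi> y \<otimes> \<phi> x"
      using cancel_t[of "t A" "inv (\<phi> y)" "\<phi> x"] tc uc wc by simp
    from d show ?thesis unfolding c1 c2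
    proof
      assume "inv (\<phi> x) \<otimes> \<phi> y = inv (\<phi> x) \<otimes> inv (\<phi> y)"
      hence "\<phi> y = inv (\<phi> y)" using uc wc by simp
      hence "\<phi> y = \<one>" using inv_self[OF wc] by simp
      thus ?thesis by simp
    next
      assume "inv (\<phi> x) \<otimes> \<phi> y = \<phi> y \<otimes> \<phi> x"
      hence "inv (\<phi> x) \<otimes> \<phi> y = \<phi> x \<otimes> \<phi> y" using uc wc m_comm by simp
      hence "inv (\<phi> x) = \<phi> x" using uc wc by simp
      hence "\<phi> x = \<one>" using inv_self[OF uc] by simp
      thus ?thesis by simp
    qed
  qed
  define sgn where "sgn A \<longleftrightarrow> (\<exists>x\<in>carrier G. F2 A x \<noteq> t A \<otimes> \<phi> x)" for A
  define g where "g b z = (if b then inv z else z)" for b and z :: 'a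
  have gc: "g b z \<in> carrier G" if "z \<in> carrier G" for b z using that by (simp add: g_def)
  have g1: "g b \<one> = \<one>" for b by (simp add: g_def)
  have ginv: "g b (inv z) = inv (g b z)" if "z \<in> carrier G" for b z using that by (simp add: g_def)
  have shape: "F2 A x = t A \<otimes> g (sgn A) (\<phi> x)" if A: "A \<noteq> K1" and x: "x \<in> carrier G" for A x
  proof (cases "sgn A")
    case True
    then obtain x0 where x0: "x0 \<in> carrier G" and n: "F2 A x0 \<noteq> t A \<otimes> \<phi> x0"
      unfolding sgn_def by blast
    have h0: "F2 A x0 = t A \<otimes> inv (\<phi> x0)" using dec[OF A x0] n by blast
    have n0: "\<phi> x0 \<noteq> \<one>"
    proof
      assume "\<phi> x0 = \<one>" thus False using n h0 by simp
    qed
    have "F2 A x = t A \<otimes> inv (\<phi> x)"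
    proof (cases "F2 A x = t A \<otimes> \<phi> x")
      case True
      have "\<phi> x = \<one> \<or> \<phi> x0 = \<one>" by (rule sameA[OF A x x0 True h0])
      hence "\<phi> x = \<one>" using n0 by simp
      thus ?thesis using True by simp
    next
      case False thus ?thesis using dec[OF A x] by blast
    qed
    thus ?thesis using True by (simp add: g_def)
  next
    case False
    thus ?thesis using x unfolding sgn_def g_def by auto
  qed
  have F1pi: "F1 A x = \<pi> A" if "A \<noteq> K1" "x \<in> carrier G" for A x using dec[OF that] by blast

  have phi1: "\<phi> \<one> = \<one>" using b1 phi_app[of \<one>] by simp
  have wc: "\<phi> w \<in> carrier G" using phic w_in by simp
  have wn: "\<phi> w \<noteq> \<one>"
  proof
    assume "\<phi> w = \<one>"
    hence "\<phi> w = \<phi> \<one>" using phi1 by simp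
    hence "w = \<one>" using phi_inj w_in by (auto simp: inj_on_def)
    thus False using w_ne by simp
  qed

  have noFT: "\<not> (\<not> sgn A \<and> sgn B)" if A: "A \<noteq> K1" and B: "B \<noteq> K1" and AB: "A \<noteq> B" for A B
  proof
    assume sg: "\<not> sgn A \<and> sgn B"
    let ?C = "klein_mult A B"
    have C: "?C \<noteq> K1" using AB by (simp add: km_eq_K1)
    let ?\<alpha> = "inv (t A) \<otimes> t B" and ?\<beta> = "inv (t B) \<otimes> t A"
    have D: "t ?C = ?\<alpha> \<otimes> (inv (\<phi> x) \<otimes> inv (\<phi> x)) \<or> t ?C = ?\<beta> \<otimes> (\<phi> x \<otimes> \<phi> x)"
      if x: "x \<in> carrier G" for x
    proof -
      have uc: "\<phi> x \<in> carrier G" using phic x by simp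
      have z: "\<one> = (if B = K1 then x \<otimes> x else inv x \<otimes> x)" using B x by simp
      from Hp[where A=A and B=B, OF x x z]
      have h: "(F1 ?C \<one>, F2 ?C \<one>) =
         (klein_mult (F1 A x) (F1 B x), if F1 B x = K1 then F2 A x \<otimes> F2 B x else inv (F2 A x) \<otimes> F2 B x)
       \<or> (F1 ?C \<one>, F2 ?C \<one>) =
         (klein_mult (F1 B x) (F1 A x), if F1 A x = K1 then F2 B x \<otimes> F2 A x else inv (F2 B x) \<otimes> F2 A x)" .
      have F1s: "F1 A x \<noteq> K1" "F1 B x \<noteq> K1" using nK A B x by auto
      from h F1s have "F2 ?C \<one> = inv (F2 A x) \<otimes> F2 B x \<or> F2 ?C \<one> = inv (F2 B x) \<otimes> F2 A x"
        by auto
      moreover have "F2 ?C \<one> = t ?C" by (simp add: t_def)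
      moreover have "F2 A x = t A \<otimes> \<phi> x" using shape[OF A x] sg by (simp add: g_def)
      moreover have "F2 B x = t B \<otimes> inv (\<phi> x)" using shape[OF B x] sg by (simp add: g_def)
      ultimately have d: "t ?C = inv (t A \<otimes> \<phi> x) \<otimes> (t B \<otimes> inv (\<phi> x))
          \<or> t ?C = inv (t B \<otimes> inv (\<phi> x)) \<otimes> (t A \<otimes> \<phi> x)" by simp
      have n1: "inv (t A \<otimes> \<phi> x) \<otimes> (t B \<otimes> inv (\<phi> x)) = ?\<alpha> \<otimes> (inv (\<phi> x) \<otimes> inv (\<phi> x))"
        using tc uc by (simp add: inv_mult m_ac)
      have n2: "inv (t B \<otimes> inv (\<phi> x)) \<otimes> (t A \<otimes> \<phi> x) = ?\<beta> \<otimes> (\<phi> x \<otimes> \<phi> x)"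
        using tc uc by (simp add: inv_mult m_ac)
      from d show ?thesis unfolding n1 n2 .
    qed
    show False
    proof (rule three[OF wc wn _ _ tc])
      show "?\<alpha> \<in> carrier G" "?\<beta> \<in> carrier G" using tc by simp_all
      fix u assume u: "u \<in> {\<one>, \<phi> w, inv (\<phi> w)}"
      show "t ?C = ?\<alpha> \<otimes> (inv u \<otimes> inv u) \<or> t ?C = ?\<beta> \<otimes> (u \<otimes> u)"
      proof -
        have "\<exists>x\<in>carrier G. u = \<phi> x"
        proof -
          from u consider "u = \<one>" | "u = \<phi> w" | "u = inv (\<phi> w)" by blast
          thus ?thesis
          proof cases
            case 1 thus ?thesis using phi1 by (intro bexI[of _ \<one>]) auto
          next
            case 2 thus ?thesis using w_in by (intro bexI[of _ w]) auto
          next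
            case 3 thus ?thesis using w_in php(3)[OF w_in] by (intro bexI[of _ "inv w"]) auto
          qed
        qed
        then obtain x where x: "x \<in> carrier G" and ux: "u = \<phi> x" by blast
        show ?thesis using D[OF x] unfolding ux .
      qed
    qed
  qed
  define \<epsilon> where "\<epsilon> = sgn Ka"
  have sgnc: "sgn A = \<epsilon>" if A: "A \<noteq> K1" for A
  proof (cases "A = Ka")
    case True thus ?thesis by (simp add: \<epsilon>_def)
  next
    case False
    have Ka: "Ka \<noteq> K1" by simp
    have F': "Ka \<noteq> A" using False by simp
    show ?thesis using noFT[OF A Ka False] noFT[OF Ka A F'] unfolding \<epsilon>_def by blast
  qed

  have tC: "t (klein_mult A B) = inv (t A) \<otimes> t B"
    if A: "A \<noteq> K1" and B: "B \<noteq> K1" and AB: "A \<noteq> B" for A B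
  proof -
    let ?C = "klein_mult A B"
    have C: "?C \<noteq> K1" using AB by (simp add: km_eq_K1)
    have D: "t ?C \<otimes> inv (g \<epsilon> (\<phi> x)) = inv (t A \<otimes> g \<epsilon> (\<phi> x)) \<otimes> t B
       \<or> t ?C \<otimes> inv (g \<epsilon> (\<phi> x)) = inv (t B) \<otimes> (t A \<otimes> g \<epsilon> (\<phi> x))"
      if x: "x \<in> carrier G" for x
    proof -
      have uc: "\<phi> x \<in> carrier G" using phic x by simp
      have z: "inv x = (if B = K1 then x \<otimes> \<one> else inv x \<otimes> \<one>)" using B x by simp
      from Hp[where A=A and B=B, OF x one_closed z]
      have h: "(F1 ?C (inv x), F2 ?C (inv x)) =
         (klein_mult (F1 A x) (F1 B \<one>), if F1 B \<one> = K1 then F2 A x \<otimes> F2 B \<one> else inv (F2 A x) \<otimes> F2 B \<one>)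
       \<or> (F1 ?C (inv x), F2 ?C (inv x)) =
         (klein_mult (F1 B \<one>) (F1 A x), if F1 A x = K1 then F2 B \<one> \<otimes> F2 A x else inv (F2 B \<one>) \<otimes> F2 A x)" .
      have F1s: "F1 A x \<noteq> K1" "F1 B \<one> \<noteq> K1" using nK A B x by auto
      from h F1s have "F2 ?C (inv x) = inv (F2 A x) \<otimes> F2 B \<one> \<or> F2 ?C (inv x) = inv (F2 B \<one>) \<otimes> F2 A x"
        by auto
      moreover have "F2 ?C (inv x) = t ?C \<otimes> inv (g \<epsilon> (\<phi> x))"
        using shape[OF C inv_closed[OF x]] sgnc[OF C] php(3)[OF x] ginv[OF uc] by simp
      moreover have "F2 B \<one> = t B" by (simp add: t_def)
      moreover have "F2 A x = t A \<otimes> g \<epsilon> (\<phi> x)" using shape[OF A x] sgnc[OF A] by simp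
      ultimately show ?thesis by simp
    qed
    have gw: "g \<epsilon> (\<phi> w) \<in> carrier G" using gc wc by simp
    have gwn: "g \<epsilon> (\<phi> w) \<noteq> \<one>"
    proof
      assume "g \<epsilon> (\<phi> w) = \<one>"
      hence "\<phi> w = \<one>" using wc by (auto simp: g_def split: if_splits)
      thus False using wn by simp
    qed
    show ?thesis
    proof (rule two[OF gw gwn tc tc tc])
      fix z assume z: "z \<in> {\<one>, g \<epsilon> (\<phi> w)}"
      show "t ?C \<otimes> inv z = inv (t A \<otimes> z) \<otimes> t B \<or> t ?C \<otimes> inv z = inv (t B) \<otimes> (t A \<otimes> z)"
      proof -
        have "\<exists>x\<in>carrier G. z = g \<epsilon> (\<phi> x)"
        proof -
          from z consider "z = \<one>" | "z = g \<epsilon> (\<phi> w)" by blast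
          thus ?thesis
          proof cases
            case 1 thus ?thesis using phi1 g1 by (intro bexI[of _ \<one>]) auto
          next
            case 2 thus ?thesis using w_in by (intro bexI[of _ w]) auto
          qed
        qed
        then obtain x where x: "x \<in> carrier G" and zx: "z = g \<epsilon> (\<phi> x)" by blast
        show ?thesis using D[OF x] unfolding zx .
      qed
    qed
  qed
  have teq: "t A = t B" if A: "A \<noteq> K1" and B: "B \<noteq> K1" and AB: "A \<noteq> B" for A B
  proof -
    have "inv (t A) \<otimes> t B = inv (t B) \<otimes> t A"
      using tC[OF A B AB] tC[OF B A AB[symmetric]] km_comm[of A B] by simp
    thus ?thesis using inv_swap_eq tc by blast
  qed
  have tall: "t D = \<one>" if D: "D \<noteq> K1" for D
  proof -
    obtain A B where AB: "A \<noteq> K1" "B \<noteq> K1" "A \<noteq> B" "klein_mult A B = D"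
      using km_surj[OF D] by blast
    have "t D = inv (t A) \<otimes> t B" using tC[OF AB(1-3)] AB(4) by simp
    also have "\<dots> = inv (t A) \<otimes> t A" using teq[OF AB(1-3)] by simp
    also have "\<dots> = \<one>" using tc by simp
    finally show ?thesis .
  qed

  define e where "e = (if \<epsilon> then 1 else (0::int))"
  have sge: "sg e A z = g \<epsilon> z" if "A \<noteq> K1" for A z using that by (simp add: sg_def e_def g_def)
  have "f = PhiH e p \<phi>"
  proof
    fix PP :: "klein \<times> 'a"
    obtain A x where PP: "PP = (A, x)" by fastforce
    show "f PP = PhiH e p \<phi> PP"
    proof (cases "x \<in> carrier G")
      case False
      hence "PP \<notin> ?S" using PP by simp
      hence "f PP = undefined" using fext by (rule extensional_arb[rotated])
      thus ?thesis using False PP by (simp add: PhiH_def)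
    next
      case x: True
      show ?thesis
      proof (cases "A = K1")
        case True thus ?thesis using x PP fK1 by (simp add: PhiH_app sg_def)
      next
        case A: False
        have "f PP = (\<pi> A, t A \<otimes> g \<epsilon> (\<phi> x))"
          using PP fF F1pi[OF A x] shape[OF A x] sgnc[OF A] by simp
        also have "\<dots> = (kp p A, g \<epsilon> (\<phi> x))" using tall[OF A] kpp gc[OF phic[OF x]] by simp
        also have "\<dots> = PhiH e p \<phi> PP" using PP x sge[OF A] by (simp add: PhiH_app)
        finally show ?thesis .
      qed
    qed
  qed
  moreover have "e \<in> {0,1}" by (simp add: e_def)
  ultimately show ?thesis using p phi_auto by blast
qed

end

context oddM begin

lemma sg_sg: "e1 \<in> {0,1} \<Longrightarrow> e2 \<in> {0,1} \<Longrightarrow> y \<in> carrier G \<Longrightarrow>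
   sg e1 A (sg e2 A y) = sg ((e1 + e2) mod 2) A y"
  by (auto simp: sg_def)

lemma phi_sg: "\<phi> \<in> auto G \<Longrightarrow> y \<in> carrier G \<Longrightarrow> \<phi> (sg e A y) = sg e A (\<phi> y)"
  by (simp add: sg_def auto_props(3))

lemma PhiH_comp:
  assumes p1: "p1 permutes {1..3}" and p2: "p2 permutes {1..3}"
    and f1: "\<phi>1 \<in> auto G" and f2: "\<phi>2 \<in> auto G"
    and e1: "e1 \<in> {0,1}" and e2: "e2 \<in> {0,1}"
  shows "compose ((UNIV::klein set) \<times> carrier G) (PhiH e1 p1 \<phi>1) (PhiH e2 p2 \<phi>2)
     = PhiH ((e1 + e2) mod 2) (p1 \<circ> p2) (compose (carrier G) \<phi>1 \<phi>2)"
proof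
  fix PP :: "klein \<times> 'a"
  obtain A x where PP: "PP = (A, x)" by fastforce
  show "compose (UNIV \<times> carrier G) (PhiH e1 p1 \<phi>1) (PhiH e2 p2 \<phi>2) PP =
        PhiH ((e1 + e2) mod 2) (p1 \<circ> p2) (compose (carrier G) \<phi>1 \<phi>2) PP"
  proof (cases "x \<in> carrier G")
    case False thus ?thesis using PP by (simp add: compose_def PhiH_def)
  next
    case x: True
    have c2: "\<phi>2 x \<in> carrier G" using auto_props(1)[OF f2 x] .
    have "compose (UNIV \<times> carrier G) (PhiH e1 p1 \<phi>1) (PhiH e2 p2 \<phi>2) PP
        = PhiH e1 p1 \<phi>1 (kp p2 A, sg e2 A (\<phi>2 x))"
      using PP x by (simp add: compose_def PhiH_app)
    also have "\<dots> = (kp p1 (kp p2 A), sg e1 (kp p2 A) (\<phi>1 (sg e2 A (\<phi>2 x))))"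
      using c2 by (simp add: PhiH_app)
    also have "\<dots> = (kp (p1 \<circ> p2) A, sg e1 A (sg e2 A (\<phi>1 (\<phi>2 x))))"
      using kp_comp[OF p1 p2] phi_sg[OF f1 c2] by (simp add: sg_def)
    also have "\<dots> = (kp (p1 \<circ> p2) A, sg ((e1 + e2) mod 2) A (\<phi>1 (\<phi>2 x)))"
      using sg_sg[OF e1 e2 auto_props(1)[OF f1 c2]] by simp
    also have "\<dots> = PhiH ((e1 + e2) mod 2) (p1 \<circ> p2) (compose (carrier G) \<phi>1 \<phi>2) PP"
      using PP x by (simp add: PhiH_app compose_def)
    finally show ?thesis .
  qed
qed

lemma phi_one: "\<phi> \<in> auto G \<Longrightarrow> \<phi> \<one> = \<one>"
  by (rule group_hom.hom_one[OF auto_hom])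

lemma phi_w: assumes "\<phi> \<in> auto G" shows "\<phi> w \<noteq> \<one>"
proof
  assume "\<phi> w = \<one>"
  hence "\<phi> w = \<phi> \<one>" using phi_one[OF assms] by simp
  hence "w = \<one>" using auto_props(4)[OF assms] w_in by (auto simp: inj_on_def)
  thus False using w_ne by simp
qed

lemma PhiH_inj:
  assumes p1: "p1 permutes {1..3}" and p2: "p2 permutes {1..3}"
    and f1: "\<phi>1 \<in> auto G" and f2: "\<phi>2 \<in> auto G"
    and e1: "e1 \<in> {0,1}" and e2: "e2 \<in> {0,1}"
    and eq: "PhiH e1 p1 \<phi>1 = PhiH e2 p2 \<phi>2"
  shows "e1 = e2 \<and> p1 = p2 \<and> \<phi>1 = \<phi>2"
proof -
  have ev: "PhiH e1 p1 \<phi>1 (A, x) = PhiH e2 p2 \<phi>2 (A, x)" for A x using eq by simp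
  have "kp p1 A = kp p2 A" for A using ev[of A \<one>] by (simp add: PhiH_app)
  hence pp: "p1 = p2" using kp_eq[OF p1 p2] by blast
  have ff: "\<phi>1 = \<phi>2"
  proof
    fix x show "\<phi>1 x = \<phi>2 x"
    proof (cases "x \<in> carrier G")
      case True thus ?thesis using ev[of K1 x] by (simp add: PhiH_app sg_def)
    next
      case False thus ?thesis using auto_props(6)[OF f1] auto_props(6)[OF f2]
        by (simp add: extensional_def)
    qed
  qed
  have "sg e1 Ka (\<phi>1 w) = sg e2 Ka (\<phi>1 w)" using ev[of Ka w] w_in ff by (simp add: PhiH_app)
  moreover have "\<phi>1 w \<in> carrier G" using auto_props(1)[OF f1 w_in] .
  moreover have "inv (\<phi>1 w) \<noteq> \<phi>1 w" using inv_self phi_w[OF f1] calculation(2) by blast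
  ultimately have "e1 = e2" using e1 e2 by (auto simp: sg_def)
  thus ?thesis using pp ff by simp
qed

lemma PhiH_auto_e0:
  assumes p: "p permutes {1..3}" and ph: "\<phi> \<in> auto G" and e: "e \<in> {0,1}"
    and a: "PhiH e p \<phi> \<in> auto (L_loop G)"
  shows "e = 0"
proof (rule ccontr)
  assume "e \<noteq> 0" hence e1: "e = 1" using e by simp
  have h: "PhiH e p \<phi> \<in> hom (L_loop G) (L_loop G)" using a by (simp add: auto_def)
  have "PhiH e p \<phi> ((Ka, \<one>) \<otimes>\<^bsub>L_loop G\<^esub> (K1, w)) = PhiH e p \<phi> (Ka, \<one>) \<otimes>\<^bsub>L_loop G\<^esub> PhiH e p \<phi> (K1, w)"
    by (rule hom_mult[OF h]) (simp_all add: w_in)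
  hence "sg e Ka (\<phi> w) = inv (sg e Ka (\<phi> \<one>)) \<otimes> \<phi> w \<or> sg e Ka (\<phi> w) = sg e Ka (\<phi> \<one>) \<otimes> \<phi> w"
    using w_in by (simp add: PhiH_app sg_def)
  hence "inv (\<phi> w) = \<phi> w" using e1 phi_one[OF ph] auto_props(1)[OF ph w_in] by (auto simp: sg_def)
  thus False using inv_self auto_props(1)[OF ph w_in] phi_w[OF ph] by blast
qed

end

context oddM begin

lemma carr_Z2: "carrier (integer_mod_group 2) = {0, 1}"
  by (auto simp: carrier_integer_mod_group)
lemma carr_S3: "carrier (sym_group 3) = {p. p permutes {1..3}}"
  by (simp add: sym_group_def)
lemma mult_S3: "p \<otimes>\<^bsub>sym_group 3\<^esub> q = p \<circ> q"
  by (simp add: sym_group_def)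
lemma carr_Aut: "carrier (AutoGroup H) = auto H"
  by (simp add: AutoGroup_def BijGroup_def)
lemma mult_Aut: "f \<in> auto H \<Longrightarrow> g \<in> auto H \<Longrightarrow> f \<otimes>\<^bsub>AutoGroup H\<^esub> g = compose (carrier H) f g"
  by (simp add: AutoGroup_def BijGroup_def auto_def)
lemma carr_Half: "carrier (HalfGroup H) = half_auto H"
  by (simp add: HalfGroup_def BijGroup_def)
lemma mult_Half: "f \<in> half_auto H \<Longrightarrow> g \<in> half_auto H \<Longrightarrow> f \<otimes>\<^bsub>HalfGroup H\<^esub> g = compose (carrier H) f g"
  by (simp add: HalfGroup_def BijGroup_def half_auto_def)

lemma auto_sub_half: "auto (L_loop G) \<subseteq> half_auto (L_loop G)"
proof
  fix f assume f: "f \<in> auto (L_loop G)"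
  hence h: "f \<in> hom (L_loop G) (L_loop G)" and b: "f \<in> Bij (carrier (L_loop G))" by (simp_all add: auto_def)
  have "\<forall>x\<in>carrier (L_loop G). \<forall>y\<in>carrier (L_loop G). f (x \<otimes>\<^bsub>L_loop G\<^esub> y) = f x \<otimes>\<^bsub>L_loop G\<^esub> f y"
    using h by (simp add: hom_def)
  thus "f \<in> half_auto (L_loop G)" using b unfolding half_auto_def by blast
qed

lemma half_iso:
  "(\<lambda>t. PhiH (fst t) (fst (snd t)) (snd (snd t))) \<in> iso (integer_mod_group 2 \<times>\<times> sym_group 3 \<times>\<times> AutoGroup G) (HalfGroup (L_loop G))"
  (is "?h \<in> iso ?P ?H")
proof -
  have cP: "carrier ?P = {0,1} \<times> ({p. p permutes {1..3}} \<times> auto G)"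
    by (simp add: carr_Z2 carr_S3 carr_Aut)
  have hom: "?h \<in> hom ?P ?H"
  proof (rule homI)
    fix t assume "t \<in> carrier ?P"
    hence "t \<in> {0,1} \<times> ({p. p permutes {1..3}} \<times> auto G)" unfolding cP .
    hence "fst (snd t) permutes {1..3}" "snd (snd t) \<in> auto G"
      by (simp_all only: mem_Times_iff mem_Collect_eq)
    thus "?h t \<in> carrier ?H" by (simp add: carr_Half PhiH_half)
  next
    fix t1 t2 assume t1: "t1 \<in> carrier ?P" and t2: "t2 \<in> carrier ?P"
    obtain e1 p1 f1 where T1: "t1 = (e1, p1, f1)" by (cases t1) auto
    obtain e2 p2 f2 where T2: "t2 = (e2, p2, f2)" by (cases t2) auto
    have a1: "e1 \<in> {0,1}" "p1 permutes {1..3}" "f1 \<in> auto G" using t1 unfolding T1 cP by (simp_all only: mem_Sigma_iff mem_Collect_eq)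
    have a2: "e2 \<in> {0,1}" "p2 permutes {1..3}" "f2 \<in> auto G" using t2 unfolding T2 cP by (simp_all only: mem_Sigma_iff mem_Collect_eq)
    have "t1 \<otimes>\<^bsub>?P\<^esub> t2 = ((e1 + e2) mod 2, p1 \<circ> p2, compose (carrier G) f1 f2)"
      using T1 T2 a1 a2 by (simp add: mult_S3 mult_Aut)
    hence "?h (t1 \<otimes>\<^bsub>?P\<^esub> t2) = PhiH ((e1 + e2) mod 2) (p1 \<circ> p2) (compose (carrier G) f1 f2)" by simp
    also have "\<dots> = compose (carrier (L_loop G)) (PhiH e1 p1 f1) (PhiH e2 p2 f2)"
      using PhiH_comp[OF a1(2) a2(2) a1(3) a2(3) a1(1) a2(1)] by simp
    also have "\<dots> = PhiH e1 p1 f1 \<otimes>\<^bsub>?H\<^esub> PhiH e2 p2 f2"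
      using PhiH_half a1 a2 by (simp add: mult_Half)
    finally show "?h (t1 \<otimes>\<^bsub>?P\<^esub> t2) = ?h t1 \<otimes>\<^bsub>?H\<^esub> ?h t2" using T1 T2 by simp
  qed
  have inj: "inj_on ?h (carrier ?P)"
  proof (rule inj_onI)
    fix t1 t2 assume t1: "t1 \<in> carrier ?P" and t2: "t2 \<in> carrier ?P" and eq: "?h t1 = ?h t2"
    obtain e1 p1 f1 where T1: "t1 = (e1, p1, f1)" by (cases t1) auto
    obtain e2 p2 f2 where T2: "t2 = (e2, p2, f2)" by (cases t2) auto
    have a1: "e1 \<in> {0,1}" "p1 permutes {1..3}" "f1 \<in> auto G" using t1 unfolding T1 cP by (simp_all only: mem_Sigma_iff mem_Collect_eq)
    have a2: "e2 \<in> {0,1}" "p2 permutes {1..3}" "f2 \<in> auto G" using t2 unfolding T2 cP by (simp_all only: mem_Sigma_iff mem_Collect_eq)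
    have "PhiH e1 p1 f1 = PhiH e2 p2 f2" using eq T1 T2 by simp
    hence "e1 = e2 \<and> p1 = p2 \<and> f1 = f2" by (rule PhiH_inj[OF a1(2) a2(2) a1(3) a2(3) a1(1) a2(1)])
    thus "t1 = t2" using T1 T2 by simp
  qed
  have img: "?h ` carrier ?P = carrier ?H"
  proof
    show "?h ` carrier ?P \<subseteq> carrier ?H" using hom by (auto simp: hom_def)
    show "carrier ?H \<subseteq> ?h ` carrier ?P"
    proof
      fix f assume "f \<in> carrier ?H"
      hence "f \<in> half_auto (L_loop G)" by (simp add: carr_Half)
      then obtain e p \<phi> where e: "e \<in> {0,1::int}" "p permutes {1..3}" "\<phi> \<in> auto G" "f = PhiH e p \<phi>"
        using char by blast
      hence "(e, p, \<phi>) \<in> carrier ?P" using cP by simp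
      moreover have "f = ?h (e, p, \<phi>)" using e by simp
      ultimately show "f \<in> ?h ` carrier ?P" by blast
    qed
  qed
  show ?thesis unfolding iso_def using hom inj img by (simp add: bij_betw_def)
qed

lemma aut_iso:
  "(\<lambda>t. PhiH 0 (fst t) (snd t)) \<in> iso (sym_group 3 \<times>\<times> AutoGroup G) (AutoGroup (L_loop G))"
  (is "?h \<in> iso ?P ?H")
proof -
  have cP: "carrier ?P = {p. p permutes {1..3}} \<times> auto G"
    by (simp add: carr_S3 carr_Aut)
  have hom: "?h \<in> hom ?P ?H"
  proof (rule homI)
    fix t assume "t \<in> carrier ?P"
    hence "t \<in> {p. p permutes {1..3}} \<times> auto G" unfolding cP .
    hence "fst t permutes {1..3}" "snd t \<in> auto G"
      by (simp_all only: mem_Times_iff mem_Collect_eq)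
    thus "?h t \<in> carrier ?H" by (simp add: carr_Aut PhiH_auto)
  next
    fix t1 t2 assume t1: "t1 \<in> carrier ?P" and t2: "t2 \<in> carrier ?P"
    obtain p1 f1 where T1: "t1 = (p1, f1)" by (cases t1) auto
    obtain p2 f2 where T2: "t2 = (p2, f2)" by (cases t2) auto
    have a1: "p1 permutes {1..3}" "f1 \<in> auto G" using t1 unfolding T1 cP by (simp_all only: mem_Sigma_iff mem_Collect_eq)
    have a2: "p2 permutes {1..3}" "f2 \<in> auto G" using t2 unfolding T2 cP by (simp_all only: mem_Sigma_iff mem_Collect_eq)
    have z: "(0::int) \<in> {0,1}" by simp
    have "t1 \<otimes>\<^bsub>?P\<^esub> t2 = (p1 \<circ> p2, compose (carrier G) f1 f2)"
      using T1 T2 a1 a2 by (simp add: mult_S3 mult_Aut)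
    hence "?h (t1 \<otimes>\<^bsub>?P\<^esub> t2) = PhiH ((0 + 0) mod 2) (p1 \<circ> p2) (compose (carrier G) f1 f2)" by simp
    also have "\<dots> = compose (carrier (L_loop G)) (PhiH 0 p1 f1) (PhiH 0 p2 f2)"
      using PhiH_comp[OF a1(1) a2(1) a1(2) a2(2) z z] by simp
    also have "\<dots> = PhiH 0 p1 f1 \<otimes>\<^bsub>?H\<^esub> PhiH 0 p2 f2"
      using PhiH_auto a1 a2 by (simp add: mult_Aut)
    finally show "?h (t1 \<otimes>\<^bsub>?P\<^esub> t2) = ?h t1 \<otimes>\<^bsub>?H\<^esub> ?h t2" using T1 T2 by simp
  qed
  have inj: "inj_on ?h (carrier ?P)"
  proof (rule inj_onI)
    fix t1 t2 assume t1: "t1 \<in> carrier ?P" and t2: "t2 \<in> carrier ?P" and eq: "?h t1 = ?h t2"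
    obtain p1 f1 where T1: "t1 = (p1, f1)" by (cases t1) auto
    obtain p2 f2 where T2: "t2 = (p2, f2)" by (cases t2) auto
    have a1: "p1 permutes {1..3}" "f1 \<in> auto G" using t1 unfolding T1 cP by (simp_all only: mem_Sigma_iff mem_Collect_eq)
    have a2: "p2 permutes {1..3}" "f2 \<in> auto G" using t2 unfolding T2 cP by (simp_all only: mem_Sigma_iff mem_Collect_eq)
    have z: "(0::int) \<in> {0,1}" by simp
    have "PhiH 0 p1 f1 = PhiH 0 p2 f2" using eq T1 T2 by simp
    hence "0 = (0::int) \<and> p1 = p2 \<and> f1 = f2" by (rule PhiH_inj[OF a1(1) a2(1) a1(2) a2(2) z z])
    thus "t1 = t2" using T1 T2 by simp
  qed
  have img: "?h ` carrier ?P = carrier ?H"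
  proof
    show "?h ` carrier ?P \<subseteq> carrier ?H" using hom by (auto simp: hom_def)
    show "carrier ?H \<subseteq> ?h ` carrier ?P"
    proof
      fix f assume "f \<in> carrier ?H"
      hence fa: "f \<in> auto (L_loop G)" by (simp add: carr_Aut)
      hence "f \<in> half_auto (L_loop G)" using auto_sub_half by blast
      then obtain e p \<phi> where e: "e \<in> {0,1::int}" "p permutes {1..3}" "\<phi> \<in> auto G" "f = PhiH e p \<phi>"
        using char by blast
      have "e = 0" using PhiH_auto_e0[OF e(2) e(3) e(1)] fa e(4) by simp
      hence "(p, \<phi>) \<in> carrier ?P" "f = ?h (p, \<phi>)" using e cP by simp_all
      thus "f \<in> ?h ` carrier ?P" by blast
    qed
  qed
  show ?thesis unfolding iso_def using hom inj img by (simp add: bij_betw_def)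
qed

theorem main:
  "AutoGroup (L_loop G) \<cong> sym_group 3 \<times>\<times> AutoGroup G
   \<and> HalfGroup (L_loop G) \<cong> integer_mod_group 2 \<times>\<times> sym_group 3 \<times>\<times> AutoGroup G"
proof
  have gA: "group (AutoGroup G)" by (rule group.AutoGroup[OF is_group])
  have g1: "group (sym_group 3 \<times>\<times> AutoGroup G)"
    by (rule DirProd_group[OF sym_group_is_group gA])
  have g2: "group (integer_mod_group 2 \<times>\<times> sym_group 3 \<times>\<times> AutoGroup G)"
    by (rule DirProd_group[OF group_integer_mod_group g1])
  show "AutoGroup (L_loop G) \<cong> sym_group 3 \<times>\<times> AutoGroup G"
    by (rule group.iso_sym[OF g1 is_isoI[OF aut_iso]])
  show "HalfGroup (L_loop G) \<cong> integer_mod_group 2 \<times>\<times> sym_group 3 \<times>\<times> AutoGroup G"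
    by (rule group.iso_sym[OF g2 is_isoI[OF half_iso]])
qed

end

theorem theorem5p6:
  fixes M :: "('a, 'b) monoid_scheme"
  assumes "comm_group M"
    and "finite (carrier M)"
    and "odd (order M)"
    and "group_exponent M > 2"
  shows "AutoGroup (L_loop M) \<cong> sym_group 3 \<times>\<times> AutoGroup M
       \<and> HalfGroup (L_loop M) \<cong> integer_mod_group 2 \<times>\<times> sym_group 3 \<times>\<times> AutoGroup M"
proof -
  interpret M: comm_group M by (rule assms(1))
  have "\<exists>w\<in>carrier M. w \<noteq> \<one>\<^bsub>M\<^esub>"
  proof (rule ccontr)
    assume "\<not> (\<exists>w\<in>carrier M. w \<noteq> \<one>\<^bsub>M\<^esub>)"
    hence all: "\<forall>x\<in>carrier M. x = \<one>\<^bsub>M\<^esub>" by blast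
    have "group_exponent M = 1" unfolding group_exponent_def
    proof (rule Least_equality)
      show "0 < (1::nat) \<and> (\<forall>x\<in>carrier M. x [^]\<^bsub>M\<^esub> (1::nat) = \<one>\<^bsub>M\<^esub>)" using all by simp
      show "\<And>y::nat. 0 < y \<and> (\<forall>x\<in>carrier M. x [^]\<^bsub>M\<^esub> y = \<one>\<^bsub>M\<^esub>) \<Longrightarrow> 1 \<le> y"
        by (erule conjE) linarith
    qed
    thus False using assms(4) by simp
  qed
  then obtain w where w: "w \<in> carrier M" "w \<noteq> \<one>\<^bsub>M\<^esub>" by blast
  interpret oddM M w
    by (unfold_locales) (use assms w in auto)
  show ?thesis by (rule main)
qed


end
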